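(* Let $a>1/e$ be a real number. Then, as $t\to+\infty$, $$f(t,a)\sim\left(\frac{2\pi t}{ea}\right)^{1/2}\exp\frac{t}{ea},$$ where $f(t,a)=t\int_{0}^{1}(ax)^{-tx}\,dx$.
   Context: For real $a>0$ and real $t$, $f(t,a)=t\int_0^1 (ax)^{-tx}\,dx$, where $(ax)^{-tx}=\exp(-tx\ln(ax))$ for $x\in(0,1]$ (value $1$ at $x=0$). The notation $g\sim h$ means $g/h\to 1$. *)

theory Defs
  imports "HOL-Analysis.Analysis" "HOL-Library.Landau_Symbols"
begin

definition integrand :: "real \<Rightarrow> real \<Rightarrow> real \<Rightarrow> real" where
  "integrand t a x = (if x = 0 then 1 else exp (- t * x * ln (a * x)))"

definition f :: "real \<Rightarrow> real \<Rightarrow> real" where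
  "f t a = t * integral {0..1} (integrand t a)"

end

theory Submission imports Defs "HOL-Probability.Distributions" "HOL-Real_Asymp.Real_Asymp"
begin

definition H :: "real \<Rightarrow> real" where "H y = y * ln y - y + 1"

lemma H_cont: assumes "b > 0" shows "continuous_on {0..b} H"
proof (rule continuous_on_IccI)
  show "(H \<longlongrightarrow> H 0) (at_right 0)" unfolding H_def by real_asymp
  show "(H \<longlongrightarrow> H b) (at_left b)" unfolding H_def using assms
    by (intro tendsto_intros) auto
  show "H \<midarrow>x\<rightarrow> H x" if "0 < x" "x < b" for x unfolding H_def using that
    by (intro tendsto_intros) auto
qed (use assms in auto)

lemma H_taylor: assumes "y > 0"
  shows "\<exists>t. min 1 y \<le> t \<and> t \<le> max 1 y \<and> H y = (y - 1)^2 / (2 * t)"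
proof (cases "y = 1")
  case True then show ?thesis by (auto simp: H_def)
next
  case False
  define diff where "diff = (\<lambda>m::nat. if m = 0 then H else if m = 1 then ln else (\<lambda>t::real. 1 / t))"
  have D: "\<forall>m t. m < 2 \<and> min 1 y \<le> t \<and> t \<le> max 1 y \<longrightarrow> DERIV (diff m) t :> diff (Suc m) t"
  proof (intro allI impI)
    fix m t assume mt: "m < (2::nat) \<and> min 1 y \<le> t \<and> t \<le> max 1 y"
    then have tp: "t > 0" using assms by linarith
    show "DERIV (diff m) t :> diff (Suc m) t"
    proof (cases "m = 0")
      case True
      have "DERIV H t :> ln t" unfolding H_def
        using tp by (auto intro!: derivative_eq_intros)
      then show ?thesis using True by (simp add: diff_def)
    next
      case False
      then have "m = 1" using mt by auto
      then show ?thesis using tp by (auto simp: diff_def intro!: derivative_eq_intros)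
    qed
  qed
  obtain t where t: "(if y < 1 then y < t \<and> t < 1 else 1 < t \<and> t < y)"
    "H y = (\<Sum>m<2. (diff m 1 / fact m) * (y - 1)^m) + (diff 2 t / fact 2) * (y - 1)^2"
    using Taylor[of 2 diff H "min 1 y" "max 1 y" 1 y, OF _ _ D] False
    by (auto simp: diff_def)
  have "H y = (y - 1)^2 / (2 * t)" using t(2)
    by (simp add: diff_def H_def eval_nat_numeral)
  then show ?thesis using t(1) by (intro exI[of _ t]) (auto split: if_splits)
qed

lemma gauss_half: "((\<lambda>R. integral {0..R} (\<lambda>x. exp (- x\<^sup>2))) \<longlongrightarrow> sqrt pi / 2) at_top"
proof -
  have hb: "has_bochner_integral lborel (\<lambda>x. indicator {0..} x *\<^sub>R exp (- x\<^sup>2)) (sqrt pi / 2)"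
    by (rule gaussian_moment_0)
  have si: "set_integrable lborel {0..} (\<lambda>x::real. exp (- x\<^sup>2))"
    using hb unfolding set_integrable_def has_bochner_integral_iff by simp
  have sv: "set_lebesgue_integral lborel {0..} (\<lambda>x::real. exp (- x\<^sup>2)) = sqrt pi / 2"
    using hb unfolding set_lebesgue_integral_def by (simp add: has_bochner_integral_integral_eq)
  have lim: "((\<lambda>R. set_lebesgue_integral lborel {0..R} (\<lambda>x::real. exp (- x\<^sup>2))) \<longlongrightarrow> sqrt pi / 2) at_top"
    using tendsto_set_lebesgue_integral_at_top[OF _ si] sv by auto
  have "set_lebesgue_integral lborel {0..R} (\<lambda>x::real. exp (- x\<^sup>2)) = integral {0..R} (\<lambda>x. exp (- x\<^sup>2))" for R
  proof -
    have "set_integrable lborel {0..R} (\<lambda>x::real. exp (- x\<^sup>2))"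
      by (rule set_integrable_subset[OF si]) auto
    then show ?thesis by (rule set_borel_integral_eq_integral(2))
  qed
  then show ?thesis using lim by simp
qed

lemma gaussJ_eq:
  assumes d: "\<delta> > 0" and k: "k > 0"
  shows "sqrt k * integral {1-\<delta>..1+\<delta>} (\<lambda>y. exp (- (k * (y - 1)^2 / 2)))
         = 2 * sqrt 2 * integral {0..\<delta> * sqrt (k/2)} (\<lambda>x. exp (- x\<^sup>2))"
proof -
  define m where "m = sqrt (k/2)"
  define R where "R = \<delta> * m"
  have mp: "m > 0" using k by (simp add: m_def)
  have m2: "m^2 = k/2" using k by (simp add: m_def)
  have Rp: "R > 0" using mp d by (simp add: R_def)
  define E where "E = integral {0..R} (\<lambda>x. exp (- x\<^sup>2))"
  have hE: "((\<lambda>x. exp (- x\<^sup>2)) has_integral E) {0..R}"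
    unfolding E_def by (intro integrable_integral integrable_continuous_interval continuous_intros)
  have hE': "((\<lambda>x. exp (- x\<^sup>2)) has_integral E) {-R..0}"
    using has_integral_reflect_real[where f="\<lambda>x. exp (- x\<^sup>2)" and i=E and a=0 and b=R, THEN iffD2, OF hE] by simp
  have eqf: "exp (- ((m * y + - m)\<^sup>2)) = exp (- (k * (y - 1)^2 / 2))" for y
  proof -
    have "(m * y + - m)\<^sup>2 = m^2 * (y - 1)^2" by (simp add: power2_eq_square algebra_simps)
    then show ?thesis using m2 by simp
  qed
  have feq: "(\<lambda>y. exp (- ((m *\<^sub>R y + - m)\<^sup>2))) = (\<lambda>y. exp (- (k * (y - 1)^2 / 2)))"
    unfolding real_scaleR_def by (rule ext) (rule eqf)
  have A1: "((\<lambda>y. exp (- (k * (y - 1)^2 / 2))) has_integral (E / m)) {1..1+\<delta>}"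
  proof -
    have "((\<lambda>y. exp (- ((m *\<^sub>R y + - m)\<^sup>2))) has_integral (E /\<^sub>R m ^ DIM(real)))
           (cbox ((0 - - m) /\<^sub>R m) ((R - - m) /\<^sub>R m))"
      by (rule has_integral_affinity'[OF _ mp]) (simp add: hE)
    moreover have "cbox ((0 - - m) /\<^sub>R m) ((R - - m) /\<^sub>R m) = {1..1+\<delta>}"
    proof -
      have "(0 - - m) /\<^sub>R m = 1" using mp by simp
      moreover have "(R - - m) /\<^sub>R m = 1 + \<delta>" using mp unfolding R_def
        by (simp add: field_simps)
      ultimately show ?thesis by simp
    qed
    moreover have "E /\<^sub>R m ^ DIM(real) = E / m" by (simp add: divide_inverse_commute)
    ultimately show ?thesis unfolding feq by metis
  qed
  have A2: "((\<lambda>y. exp (- (k * (y - 1)^2 / 2))) has_integral (E / m)) {1-\<delta>..1}"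
  proof -
    have "((\<lambda>y. exp (- ((m *\<^sub>R y + - m)\<^sup>2))) has_integral (E /\<^sub>R m ^ DIM(real)))
           (cbox ((- R - - m) /\<^sub>R m) ((0 - - m) /\<^sub>R m))"
      by (rule has_integral_affinity'[OF _ mp]) (simp add: hE')
    moreover have "cbox ((- R - - m) /\<^sub>R m) ((0 - - m) /\<^sub>R m) = {1-\<delta>..1}"
    proof -
      have "(0 - - m) /\<^sub>R m = 1" using mp by simp
      moreover have "(- R - - m) /\<^sub>R m = 1 - \<delta>" using mp unfolding R_def
        by (simp add: field_simps)
      ultimately show ?thesis by simp
    qed
    moreover have "E /\<^sub>R m ^ DIM(real) = E / m" by (simp add: divide_inverse_commute)
    ultimately show ?thesis unfolding feq by metis
  qed
  have "((\<lambda>y. exp (- (k * (y - 1)^2 / 2))) has_integral (E / m + E / m)) {1-\<delta>..1+\<delta>}"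
    using has_integral_combine[OF _ _ A2 A1] d by simp
  then have "integral {1-\<delta>..1+\<delta>} (\<lambda>y. exp (- (k * (y - 1)^2 / 2))) = 2 * E / m"
    by (simp add: integral_unique)
  moreover have "sqrt k / m = sqrt 2"
    using k by (simp add: m_def real_sqrt_divide)
  moreover have "sqrt k * (2 * E / m) = 2 * (sqrt k / m) * E" by simp
  ultimately show ?thesis unfolding E_def R_def m_def by simp
qed

lemma gaussJ:
  assumes d: "\<delta> > 0"
  shows "((\<lambda>k. sqrt k * integral {1-\<delta>..1+\<delta>} (\<lambda>y. exp (- (k * (y - 1)^2 / 2)))) \<longlongrightarrow> sqrt (2 * pi)) at_top"
proof -
  have fl: "filterlim (\<lambda>k. \<delta> * sqrt (k/2)) at_top at_top" using d by real_asymp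
  have L: "((\<lambda>k. integral {0..\<delta> * sqrt (k/2)} (\<lambda>x. exp (- x\<^sup>2))) \<longlongrightarrow> sqrt pi / 2) at_top"
    using filterlim_compose[OF gauss_half fl] by simp
  have L2: "((\<lambda>k. 2 * sqrt 2 * integral {0..\<delta> * sqrt (k/2)} (\<lambda>x. exp (- x\<^sup>2))) \<longlongrightarrow> 2 * sqrt 2 * (sqrt pi / 2)) at_top"
    by (rule tendsto_mult_left[OF L])
  have c: "2 * sqrt 2 * (sqrt pi / 2) = sqrt (2 * pi)" by (simp add: real_sqrt_mult)
  have ev: "eventually (\<lambda>k. 2 * sqrt 2 * integral {0..\<delta> * sqrt (k/2)} (\<lambda>x. exp (- x\<^sup>2)) =
     sqrt k * integral {1-\<delta>..1+\<delta>} (\<lambda>y. exp (- (k * (y - 1)^2 / 2)))) at_top"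
    using eventually_gt_at_top[of 0]
  proof eventually_elim
    case (elim k) then show ?case using gaussJ_eq[OF d, of k] by simp
  qed
  show ?thesis using Lim_transform_eventually[OF L2 ev] c by simp
qed


lemma H_near:
  assumes d: "0 < \<delta>" "\<delta> \<le> 1/2" and y: "\<bar>y - 1\<bar> \<le> \<delta>"
  shows "(y-1)^2 / (2*(1+\<delta>)) \<le> H y" "H y \<le> (y-1)^2 / (2*(1-\<delta>))"
proof -
  have yp: "y > 0" using d y by linarith
  obtain t where t: "min 1 y \<le> t" "t \<le> max 1 y" "H y = (y - 1)^2 / (2 * t)"
    using H_taylor[OF yp] by blast
  have t1: "1 - \<delta> \<le> t" "t \<le> 1 + \<delta>" using t(1,2) y by auto
  have tp: "0 < 1 - \<delta>" using d by simp
  show "(y-1)^2 / (2*(1+\<delta>)) \<le> H y" unfolding t(3)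
    by (rule divide_left_mono) (use t1 tp in auto)
  show "H y \<le> (y-1)^2 / (2*(1-\<delta>))" unfolding t(3)
    by (rule divide_left_mono) (use t1 tp in auto)
qed

lemma H_far:
  assumes d: "0 < \<delta>" "\<delta> \<le> 1/2" and b: "1 < b" and y: "0 \<le> y" "y \<le> b" "\<delta> \<le> \<bar>y - 1\<bar>"
  shows "\<delta>^2 / (2*b) \<le> H y"
proof (cases "y = 0")
  case True
  have "\<delta>^2 \<le> 1" using d by (simp add: abs_le_square_iff power_le_one)
  then have "\<delta>^2 / (2*b) \<le> 1" using b by (simp add: divide_le_eq)
  then show ?thesis using True by (simp add: H_def)
next
  case False
  then have yp: "y > 0" using y by simp
  obtain t where t: "min 1 y \<le> t" "t \<le> max 1 y" "H y = (y - 1)^2 / (2 * t)"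
    using H_taylor[OF yp] by blast
  have tb: "t \<le> b" "0 < t" using t(1,2) y b yp by auto
  have "\<delta>^2 \<le> \<bar>y-1\<bar>^2" by (rule power_mono) (use y(3) d in auto)
  then have sq: "\<delta>^2 \<le> (y-1)^2" by simp
  have "\<delta>^2 / (2*b) \<le> \<delta>^2 / (2*t)"
    by (rule divide_left_mono) (use tb in auto)
  also have "\<dots> \<le> (y-1)^2 / (2*t)"
    by (rule divide_right_mono) (use sq tb in auto)
  finally show ?thesis using t(3) by simp
qed

lemma cont_g: "b > 0 \<Longrightarrow> {u..v} \<subseteq> {0..b} \<Longrightarrow> continuous_on {u..v} (\<lambda>y. exp (- s * H y))"
  by (intro continuous_intros continuous_on_subset[OF H_cont]) auto

lemma K_bounds:
  assumes d: "0 < \<delta>" "\<delta> \<le> 1/2" and b: "1 + \<delta> < b" and s: "0 \<le> s"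
  shows "integral {0..b} (\<lambda>y. exp (- s * H y)) \<le> b * exp (- s * (\<delta>^2 / (2*b)))
           + integral {1-\<delta>..1+\<delta>} (\<lambda>y. exp (- ((s/(1+\<delta>)) * (y - 1)^2 / 2)))"
    "integral {1-\<delta>..1+\<delta>} (\<lambda>y. exp (- ((s/(1-\<delta>)) * (y - 1)^2 / 2))) \<le> integral {0..b} (\<lambda>y. exp (- s * H y))"
proof -
  define c where "c = \<delta>^2 / (2*b)"
  define g where "g = (\<lambda>y. exp (- s * H y))"
  have bp: "b > 0" "b > 1" using b d by auto
  have ig: "g integrable_on {u..v}" if "{u..v} \<subseteq> {0..b}" for u v
    unfolding g_def by (rule integrable_continuous_interval[OF cont_g[OF bp(1) that]])
  have split1: "integral {0..1-\<delta>} g + integral {1-\<delta>..b} g = integral {0..b} g"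
    by (rule Henstock_Kurzweil_Integration.integral_combine) (use d b ig[of 0 b] in auto)
  have split2: "integral {1-\<delta>..1+\<delta>} g + integral {1+\<delta>..b} g = integral {1-\<delta>..b} g"
    by (rule Henstock_Kurzweil_Integration.integral_combine) (use d b ig[of "1-\<delta>" b] in auto)
  have far: "g y \<le> exp (- s * c)" if "0 \<le> y" "y \<le> b" "\<delta> \<le> \<bar>y - 1\<bar>" for y
  proof -
    have "c \<le> H y" unfolding c_def by (rule H_far) (use d bp that in auto)
    then have "s * c \<le> s * H y" using s by (rule mult_left_mono)
    then show ?thesis unfolding g_def by simp
  qed
  have I1: "integral {0..1-\<delta>} g \<le> (1-\<delta>) * exp (- s * c)"
  proof -
    have "integral {0..1-\<delta>} g \<le> integral {0..1-\<delta>} (\<lambda>_. exp (- s * c))"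
      by (rule integral_le) (use ig[of 0 "1-\<delta>"] b d far in auto)
    also have "\<dots> = (1-\<delta>) * exp (- s * c)" using d by simp
    finally show ?thesis .
  qed
  have I3: "integral {1+\<delta>..b} g \<le> (b - (1+\<delta>)) * exp (- s * c)"
  proof -
    have "integral {1+\<delta>..b} g \<le> integral {1+\<delta>..b} (\<lambda>_. exp (- s * c))"
      by (rule integral_le) (use ig[of "1+\<delta>" b] b d far in auto)
    also have "\<dots> = (b - (1+\<delta>)) * exp (- s * c)" using b by simp
    finally show ?thesis .
  qed
  have I1p: "0 \<le> integral {0..1-\<delta>} g"
    by (rule integral_nonneg) (use ig[of 0 "1-\<delta>"] d b in \<open>auto simp: g_def\<close>)
  have I3p: "0 \<le> integral {1+\<delta>..b} g"
    by (rule integral_nonneg) (use ig[of "1+\<delta>" b] b d in \<open>auto simp: g_def\<close>)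
  have near_up: "g y \<le> exp (- ((s/(1+\<delta>)) * (y - 1)^2 / 2))" if "y \<in> {1-\<delta>..1+\<delta>}" for y
  proof -
    have "\<bar>y - 1\<bar> \<le> \<delta>" using that by auto
    then have "(y-1)^2 / (2*(1+\<delta>)) \<le> H y" using H_near d by blast
    then have "s * ((y-1)^2 / (2*(1+\<delta>))) \<le> s * H y" using s by (rule mult_left_mono)
    moreover have "s * ((y-1)^2 / (2*(1+\<delta>))) = (s/(1+\<delta>)) * (y - 1)^2 / 2" by simp
    ultimately have "(s/(1+\<delta>)) * (y - 1)^2 / 2 \<le> s * H y" by linarith
    then show ?thesis unfolding g_def by simp
  qed
  have near_lo: "exp (- ((s/(1-\<delta>)) * (y - 1)^2 / 2)) \<le> g y" if "y \<in> {1-\<delta>..1+\<delta>}" for y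
  proof -
    have "\<bar>y - 1\<bar> \<le> \<delta>" using that by auto
    then have "H y \<le> (y-1)^2 / (2*(1-\<delta>))" using H_near d by blast
    then have "s * H y \<le> s * ((y-1)^2 / (2*(1-\<delta>)))" using s by (rule mult_left_mono)
    moreover have "s * ((y-1)^2 / (2*(1-\<delta>))) = (s/(1-\<delta>)) * (y - 1)^2 / 2" by simp
    ultimately have "s * H y \<le> (s/(1-\<delta>)) * (y - 1)^2 / 2" by linarith
    then show ?thesis unfolding g_def by simp
  qed
  have i2: "g integrable_on {1-\<delta>..1+\<delta>}" using ig[of "1-\<delta>" "1+\<delta>"] d b by auto
  have I2u: "integral {1-\<delta>..1+\<delta>} g \<le> integral {1-\<delta>..1+\<delta>} (\<lambda>y. exp (- ((s/(1+\<delta>)) * (y - 1)^2 / 2)))"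
    by (rule integral_le[OF i2 _ near_up]) (intro integrable_continuous_interval continuous_intros, auto)
  have I2l: "integral {1-\<delta>..1+\<delta>} (\<lambda>y. exp (- ((s/(1-\<delta>)) * (y - 1)^2 / 2))) \<le> integral {1-\<delta>..1+\<delta>} g"
    by (rule integral_le[OF _ i2 near_lo]) (intro integrable_continuous_interval continuous_intros, auto)
  have "(1-\<delta>) * exp (- s * c) + (b - (1+\<delta>)) * exp (- s * c) \<le> b * exp (- s * c)"
    using d by (simp add: algebra_simps)
  then show "integral {0..b} (\<lambda>y. exp (- s * H y)) \<le> b * exp (- s * (\<delta>^2 / (2*b)))
           + integral {1-\<delta>..1+\<delta>} (\<lambda>y. exp (- ((s/(1+\<delta>)) * (y - 1)^2 / 2)))"
    using split1 split2 I1 I3 I2u unfolding g_def c_def by linarith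
  show "integral {1-\<delta>..1+\<delta>} (\<lambda>y. exp (- ((s/(1-\<delta>)) * (y - 1)^2 / 2))) \<le> integral {0..b} (\<lambda>y. exp (- s * H y))"
    using split1 split2 I1p I3p I2l unfolding g_def by linarith
qed

lemma laplace:
  assumes b: "b > 1"
  shows "((\<lambda>s. sqrt s * integral {0..b} (\<lambda>y. exp (- s * H y))) \<longlongrightarrow> sqrt (2*pi)) at_top"
proof (rule tendstoI)
  fix e :: real assume e: "e > 0"
  define P where "P = sqrt (2*pi)"
  have Pp: "P > 0" unfolding P_def by simp
  define \<delta> where "\<delta> = min (1/2) (min ((b-1)/2) (e/(4*P)))"
  have d: "0 < \<delta>" "\<delta> \<le> 1/2" "1 + \<delta> < b" "\<delta> * P \<le> e/4"
  proof -
    show "0 < \<delta>" using b e Pp by (simp add: \<delta>_def)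
    show "\<delta> \<le> 1/2" by (simp add: \<delta>_def)
    have "\<delta> \<le> (b-1)/2" unfolding \<delta>_def by linarith
    then show "1 + \<delta> < b" using b by (auto simp: field_simps)
    have "\<delta> \<le> e/(4*P)" unfolding \<delta>_def by linarith
    then have "\<delta> * P \<le> e/(4*P) * P" by (rule mult_right_mono) (use Pp in auto)
    then show "\<delta> * P \<le> e/4" using Pp by simp
  qed
  define c where "c = \<delta>^2/(2*b)"
  have cp: "c > 0" using d b by (simp add: c_def)
  define JJ where "JJ k = integral {1-\<delta>..1+\<delta>} (\<lambda>y. exp (- (k * (y - 1)^2 / 2)))" for k
  have JJp: "JJ k \<ge> 0" for k unfolding JJ_def
    by (rule integral_nonneg) (auto intro!: integrable_continuous_interval continuous_intros)
  have G: "((\<lambda>k. sqrt k * JJ k) \<longlongrightarrow> P) at_top" unfolding JJ_def P_def by (rule gaussJ[OF d(1)])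
  have dp1: "1 + \<delta> > 0" and dm1: "1 - \<delta> > 0" using d by auto
  have fl1: "filterlim (\<lambda>s. s/(1+\<delta>)) at_top at_top" using dp1 by real_asymp
  have fl2: "filterlim (\<lambda>s. s/(1-\<delta>)) at_top at_top" using dm1 by real_asymp
  have G1: "((\<lambda>s. sqrt (s/(1+\<delta>)) * JJ (s/(1+\<delta>))) \<longlongrightarrow> P) at_top"
    using filterlim_compose[OF G fl1] by simp
  have G2: "((\<lambda>s. sqrt (s/(1-\<delta>)) * JJ (s/(1-\<delta>))) \<longlongrightarrow> P) at_top"
    using filterlim_compose[OF G fl2] by simp
  have Z: "((\<lambda>s. sqrt s * (b * exp (- s * c))) \<longlongrightarrow> 0) at_top" using cp by real_asymp
  have ev1: "eventually (\<lambda>s. sqrt (s/(1+\<delta>)) * JJ (s/(1+\<delta>)) < P + e/4) at_top"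
    by (rule order_tendstoD(2)[OF G1]) (use e in simp)
  have ev2: "eventually (\<lambda>s. P - e/4 < sqrt (s/(1-\<delta>)) * JJ (s/(1-\<delta>))) at_top"
    by (rule order_tendstoD(1)[OF G2]) (use e in simp)
  have ev3: "eventually (\<lambda>s. sqrt s * (b * exp (- s * c)) < e/8) at_top"
    by (rule order_tendstoD(2)[OF Z]) (use e in simp)
  show "eventually (\<lambda>s. dist (sqrt s * integral {0..b} (\<lambda>y. exp (- s * H y))) (sqrt (2*pi)) < e) at_top"
    using ev1 ev2 ev3 eventually_gt_at_top[of 0]
  proof eventually_elim
    case (elim s)
    define K where "K = integral {0..b} (\<lambda>y. exp (- s * H y))"
    define X1 where "X1 = sqrt (s/(1+\<delta>)) * JJ (s/(1+\<delta>))"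
    define X2 where "X2 = sqrt (s/(1-\<delta>)) * JJ (s/(1-\<delta>))"
    have sp: "s > 0" using elim by simp
    have Kb: "K \<le> b * exp (- s * c) + JJ (s/(1+\<delta>))" "JJ (s/(1-\<delta>)) \<le> K"
      using K_bounds[OF d(1,2,3), of s] sp unfolding K_def JJ_def c_def by auto
    have sq1: "sqrt s = sqrt (1+\<delta>) * sqrt (s/(1+\<delta>))"
      using dp1 by (simp add: real_sqrt_mult[symmetric])
    have sq2: "sqrt s = sqrt (1-\<delta>) * sqrt (s/(1-\<delta>))"
      using dm1 by (simp add: real_sqrt_mult[symmetric])
    have r1: "sqrt (1+\<delta>) \<le> 1+\<delta>"
    proof -
      have "1 \<le> sqrt (1+\<delta>)" using d by simp
      then have "sqrt (1+\<delta>) * 1 \<le> sqrt (1+\<delta>) * sqrt (1+\<delta>)" by (intro mult_left_mono) auto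
      then show ?thesis using d by simp
    qed
    have r2: "1-\<delta> \<le> sqrt (1-\<delta>)"
    proof -
      have "sqrt (1-\<delta>) \<le> 1" using d by auto
      then have "sqrt (1-\<delta>) * sqrt (1-\<delta>) \<le> sqrt (1-\<delta>) * 1" by (intro mult_left_mono) (use d in auto)
      then show ?thesis using d by simp
    qed
    have up1: "sqrt s * K \<le> sqrt s * (b * exp (- s * c)) + sqrt (1+\<delta>) * X1"
    proof -
      have "sqrt s * K \<le> sqrt s * (b * exp (- s * c) + JJ (s/(1+\<delta>)))"
        using Kb(1) sp by (intro mult_left_mono) auto
      also have "\<dots> = sqrt s * (b * exp (- s * c)) + sqrt s * JJ (s/(1+\<delta>))"
        by (simp add: distrib_left)
      also have "sqrt s * JJ (s/(1+\<delta>)) = sqrt (1+\<delta>) * X1"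
        unfolding X1_def sq1 by simp
      finally show ?thesis .
    qed
    have up2: "sqrt (1+\<delta>) * X1 \<le> (1+\<delta>) * (P + e/4)"
    proof -
      have "sqrt (1+\<delta>) * X1 \<le> sqrt (1+\<delta>) * (P + e/4)"
        using elim(1) unfolding X1_def by (intro mult_left_mono) (use d in auto)
      also have "\<dots> \<le> (1+\<delta>) * (P + e/4)"
        using r1 Pp e by (intro mult_right_mono) auto
      finally show ?thesis .
    qed
    have up3: "(1+\<delta>) * (P + e/4) \<le> P + e/2 + e/8"
    proof -
      have "\<delta> * (e/4) \<le> (1/2) * (e/4)" using d e by (intro mult_right_mono) auto
      moreover have "(1+\<delta>) * (P + e/4) = P + e/4 + \<delta> * P + \<delta> * (e/4)" by (simp add: algebra_simps)
      ultimately show ?thesis using d(4) by linarith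
    qed
    have lo1: "sqrt s * K \<ge> sqrt (1-\<delta>) * X2"
    proof -
      have "sqrt s * K \<ge> sqrt s * JJ (s/(1-\<delta>))"
        using Kb(2) sp by (intro mult_left_mono) auto
      moreover have "sqrt s * JJ (s/(1-\<delta>)) = sqrt (1-\<delta>) * X2"
        unfolding X2_def sq2 by simp
      ultimately show ?thesis by simp
    qed
    have X2p: "X2 \<ge> 0" unfolding X2_def using JJp sp dm1 by simp
    have lo2: "sqrt (1-\<delta>) * X2 \<ge> (1-\<delta>) * X2"
      using r2 X2p by (intro mult_right_mono) auto
    have lo3: "(1-\<delta>) * X2 \<ge> (1-\<delta>) * (P - e/4)"
      using elim(2) dm1 unfolding X2_def by (intro mult_left_mono) auto
    have lo4: "(1-\<delta>) * (P - e/4) \<ge> P - e/2"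
    proof -
      have "\<delta> * (e/4) \<ge> 0" using d e by simp
      moreover have "(1-\<delta>) * (P - e/4) = P - e/4 - \<delta> * P + \<delta> * (e/4)" by (simp add: algebra_simps add_divide_distrib diff_divide_distrib)
      ultimately show ?thesis using d(4) by linarith
    qed
    have "sqrt s * K < P + e" using up1 up2 up3 elim(3) e by linarith
    moreover have "sqrt s * K > P - e" using lo1 lo2 lo3 lo4 e by linarith
    ultimately show ?case unfolding K_def P_def dist_real_def by (simp add: abs_less_iff)
  qed
qed

lemma integrand_eq:
  assumes a: "a > 0" and x: "0 \<le> x"
  shows "integrand t a x = exp (t / (exp 1 * a)) * exp (- (t / (exp 1 * a)) * H (exp 1 * a * x))"
proof (cases "x = 0")
  case True then show ?thesis by (simp add: integrand_def H_def exp_minus field_simps)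
next
  case False
  then have xp: "x > 0" using x by simp
  have l: "ln (exp 1 * a * x) = 1 + ln (a * x)"
    using a xp by (simp add: ln_mult mult.assoc)
  have Hb: "H (exp 1 * a * x) = exp 1 * a * x * ln (a * x) + 1"
    unfolding H_def l by (simp add: algebra_simps)
  have "t / (exp 1 * a) + (- (t / (exp 1 * a)) * H (exp 1 * a * x)) = - t * x * ln (a * x)"
    unfolding Hb using a by (simp add: field_simps)
  then show ?thesis using False
    by (simp add: integrand_def exp_add[symmetric])
qed

lemma integral_eq:
  assumes a: "a > 0"
  shows "integral {0..1} (integrand t a) =
     (1 / (exp 1 * a)) * (exp (t / (exp 1 * a)) * integral {0..exp 1 * a} (\<lambda>y. exp (- (t / (exp 1 * a)) * H y)))"
proof -
  define b where "b = exp 1 * a"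
  define s where "s = t / b"
  have bp: "b > 0" using a by (simp add: b_def)
  define I where "I = integral {0..b} (\<lambda>y. exp (- s * H y))"
  have hI: "((\<lambda>y. exp (- s * H y)) has_integral I) {0..b}"
    unfolding I_def by (intro integrable_integral integrable_continuous_interval cont_g[OF bp]) auto
  have h2: "((\<lambda>y. exp s * exp (- s * H y)) has_integral (exp s * I)) {0..b}"
    by (rule has_integral_mult_right[OF hI])
  have h3: "((\<lambda>x. exp s * exp (- s * H (b *\<^sub>R x + 0))) has_integral ((exp s * I) /\<^sub>R b ^ DIM(real)))
      (cbox ((0 - 0) /\<^sub>R b) ((b - 0) /\<^sub>R b))"
    using has_integral_affinity'[where f="\<lambda>y. exp s * exp (- s * H y)" and a=0 and b=b and m=b and c=0, OF _ bp] h2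
    by simp
  have cb: "cbox ((0 - 0) /\<^sub>R b) ((b - 0) /\<^sub>R b) = {0..1::real}" using bp by simp
  have h4: "((\<lambda>x. exp s * exp (- s * H (b *\<^sub>R x + 0))) has_integral ((exp s * I) / b)) {0..1}"
    using h3 unfolding cb by (simp add: divide_inverse_commute)
  have h5: "(integrand t a has_integral ((exp s * I) / b)) {0..1}"
    by (rule has_integral_eq[OF _ h4]) (use a in \<open>auto simp: integrand_eq s_def b_def\<close>)
  then show ?thesis unfolding b_def[symmetric] s_def[symmetric] I_def[symmetric]
    by (simp add: integral_unique)
qed

theorem mainTheorem2:
  fixes a :: real
  assumes "a > 1 / exp 1"
  shows "(\<lambda>t. f t a) \<sim>[at_top]
           (\<lambda>t. sqrt (2 * pi * t / (exp 1 * a)) * exp (t / (exp 1 * a)))"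
proof -
  have ap: "a > 0" using assms by (smt (verit) exp_gt_zero divide_pos_pos zero_less_one)
  define b where "b = exp 1 * a"
  have b1: "b > 1" using assms unfolding b_def by (simp add: field_simps)
  have bp: "b > 0" using b1 by simp
  define K where "K s = integral {0..b} (\<lambda>y. exp (- s * H y))" for s
  have L: "((\<lambda>s. sqrt s * K s) \<longlongrightarrow> sqrt (2*pi)) at_top"
    unfolding K_def by (rule laplace[OF b1])
  have fl: "filterlim (\<lambda>t. t / b) at_top at_top" using bp by real_asymp
  have L2: "((\<lambda>t. sqrt (t/b) * K (t/b) / sqrt (2*pi)) \<longlongrightarrow> sqrt (2*pi) / sqrt (2*pi)) at_top"
    by (intro tendsto_divide filterlim_compose[OF L fl] tendsto_const) simp
  have ev: "eventually (\<lambda>t. sqrt (t/b) * K (t/b) / sqrt (2*pi) =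
      f t a / (sqrt (2 * pi * t / (exp 1 * a)) * exp (t / (exp 1 * a)))) at_top"
    using eventually_gt_at_top[of 0]
  proof eventually_elim
    case (elim t)
    define u where "u = t / b"
    have up: "u > 0" using elim bp by (simp add: u_def)
    have fe: "f t a = u * exp u * K u"
      unfolding f_def integral_eq[OF ap] b_def[symmetric] K_def u_def by simp
    have ge: "sqrt (2 * pi * t / (exp 1 * a)) * exp (t / (exp 1 * a)) = sqrt (2*pi) * sqrt u * exp u"
    proof -
      have "2 * pi * t / b = (2*pi) * (t/b)" by simp
      then show ?thesis unfolding b_def[symmetric] u_def by (simp only: real_sqrt_mult)
    qed
    have uu: "u = sqrt u * sqrt u" using up by simp
    have "u * exp u * K u / (sqrt (2*pi) * sqrt u * exp u) = sqrt u * K u / sqrt (2*pi)"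
      using up by (subst (1) uu) (simp add: field_simps)
    then show ?case unfolding fe ge u_def by simp
  qed
  show ?thesis
    by (rule asymp_equivI', rule Lim_transform_eventually[OF _ ev]) (use L2 in simp)
qed

end
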